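(* Let $\mathcal{D}$ be an open derivation and let $\mathsf{S}(\mathcal{D})$ be the maximum number of $?$-formulas in the conclusion of a $\mathsf{cp}$ rule of $\mathcal{D}$. If $\mathcal{D}= \mathcal{D}_0 \to_{\mathsf{cut}} \cdots \to_{\mathsf{cut}}\mathcal{D}_n$ then: \begin{enumerate} \item $n$ and $|\mathcal{D}_i|$ are in $\mathcal{O}(\mathsf{S}(\mathcal{D})^3\cdot| \mathcal{D} |^3)$ for any $i\in\{0,\dots,n\}$. \item If only principal cut-elimination steps are applied then $n$ and $|\mathcal{D}_i|$ are in $\mathcal{O}(\mathsf{S}(\mathcal{D})\cdot| \mathcal{D} |)$ for any $i\in\{0,\dots,n\}$. \item If the reduction sequence is maximal then $\mathcal{D}_n$ is cut free. \end{enumerate}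
   Context: Formulas: $A ::= X \mid X^\perp \mid A\otimes A \mid A ⅋ A \mid {!A} \mid {?A} \mid \mathbf{1} \mid \bot \mid \forall X.A \mid \exists X.A$. The rules are axiom, cut, $\otimes$, $⅋$, $\mathbf{1}$, $\bot$, weakening $?\mathsf{w}$ (from $\Gamma$ infer $\Gamma,?A$), absorption $?\mathsf{b}$ (from $\Gamma,A,?A$ infer $\Gamma,?A$), $\forall$, $\exists$ (instantiating only $(!,?)$-free formulas), conditional promotion $\mathsf{cp}$ (from $\Gamma,A$ and $?\Gamma,!A$ infer $?\Gamma,!A$), plus the rule $\mathsf{hyp}$ with no premises and arbitrary conclusion. An open derivation is a finite derivation over these rules; $|\mathcal{D}|$ is its number of rule instances. Cut-elimination $\to_{\mathsf{cut}}$: standard multiplicative, second-order and commutative steps (the latter permute a cut above a non-cut rule), and principal exponential steps: cut of two $\mathsf{cp}$ rules becomes a $\mathsf{cp}$ whose premises are the cuts of the respective left and right premises; cut of $\mathsf{cp}$ (conclusion $?\Gamma,!A$) against $?\mathsf{w}$ on $?A^\perp$ becomes $|\Gamma|$ weakenings; cut of $\mathsf{cp}$ against $?\mathsf{b}$ (premise $\Delta,A^\perp,?A^\perp$) becomes a cut of the left premise $\Gamma,A$ against $A^\perp$ and of the right premise $?\Gamma,!A$ against $?A^\perp$, followed by $|\Gamma|$ absorptions. Non-commutative steps are called principal. *)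

theory Defs
  imports Main "HOL-Library.Multiset"
begin

section \<open>Formulas of second-order MELL (de Bruijn indices for type variables)\<close>

text \<open>Var n is the propositional variable X with de Bruijn index n, NVar n its
  negation X-perp.  All A and Ex A bind index 0 in A.\<close>

datatype form =
    Var nat | NVar nat
  | Tens form form | Par form form
  | Bang form | Wn form
  | One | Bot
  | All form | Ex form

fun dual :: "form \<Rightarrow> form" where
  "dual (Var n) = NVar n"
| "dual (NVar n) = Var n"
| "dual (Tens A B) = Par (dual A) (dual B)"
| "dual (Par A B) = Tens (dual A) (dual B)"
| "dual (Bang A) = Wn (dual A)"
| "dual (Wn A) = Bang (dual A)"
| "dual One = Bot"
| "dual Bot = One"
| "dual (All A) = Ex (dual A)"
| "dual (Ex A) = All (dual A)"

fun lift :: "nat \<Rightarrow> form \<Rightarrow> form" where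
  "lift k (Var n) = Var (if n < k then n else Suc n)"
| "lift k (NVar n) = NVar (if n < k then n else Suc n)"
| "lift k (Tens A B) = Tens (lift k A) (lift k B)"
| "lift k (Par A B) = Par (lift k A) (lift k B)"
| "lift k (Bang A) = Bang (lift k A)"
| "lift k (Wn A) = Wn (lift k A)"
| "lift k One = One"
| "lift k Bot = Bot"
| "lift k (All A) = All (lift (Suc k) A)"
| "lift k (Ex A) = Ex (lift (Suc k) A)"

fun subst :: "nat \<Rightarrow> form \<Rightarrow> form \<Rightarrow> form" where
  "subst k C (Var n) = (if n < k then Var n else if n = k then C else Var (n - 1))"
| "subst k C (NVar n) = (if n < k then NVar n else if n = k then dual C else NVar (n - 1))"
| "subst k C (Tens A B) = Tens (subst k C A) (subst k C B)"
| "subst k C (Par A B) = Par (subst k C A) (subst k C B)"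
| "subst k C (Bang A) = Bang (subst k C A)"
| "subst k C (Wn A) = Wn (subst k C A)"
| "subst k C One = One"
| "subst k C Bot = Bot"
| "subst k C (All A) = All (subst (Suc k) (lift 0 C) A)"
| "subst k C (Ex A) = Ex (subst (Suc k) (lift 0 C) A)"

text \<open>(!,?)-free formulas (the only admissible witnesses of the exists-rule).\<close>
fun exp_free :: "form \<Rightarrow> bool" where
  "exp_free (Var n) = True"
| "exp_free (NVar n) = True"
| "exp_free (Tens A B) = (exp_free A \<and> exp_free B)"
| "exp_free (Par A B) = (exp_free A \<and> exp_free B)"
| "exp_free (Bang A) = False"
| "exp_free (Wn A) = False"
| "exp_free One = True"
| "exp_free Bot = True"
| "exp_free (All A) = exp_free A"
| "exp_free (Ex A) = exp_free A"

fun is_Wn :: "form \<Rightarrow> bool" where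
  "is_Wn (Wn A) = True"
| "is_Wn _ = False"

section \<open>Open derivations\<close>

text \<open>Rule labels record the principal / cut formulas:
  RCut A : cut on A (left premise contains A, right premise contains dual A);
  RTens A B, RPar A B : principal formula Tens A B / Par A B;
  RWk A, RAbs A : principal formula Wn A;
  RAll A : principal formula All A;  REx A B : principal formula Ex A, witness B;
  RCp A : conditional promotion with principal formula Bang A;
  RHyp : the hypothesis rule (no premises, arbitrary conclusion).\<close>
datatype rule =
    RAx | RCut form | RTens form form | RPar form form | ROne | RBot
  | RWk form | RAbs form | RAll form | REx form form | RCp form | RHyp

datatype deriv = Der rule "form multiset" "deriv list"

fun concl :: "deriv \<Rightarrow> form multiset" where
  "concl (Der r G ps) = G"

fun rule_ok :: "rule \<Rightarrow> form multiset \<Rightarrow> form multiset list \<Rightarrow> bool" where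
  "rule_ok RAx G cs = (cs = [] \<and> (\<exists>n. G = {#Var n, NVar n#}))"
| "rule_ok (RCut A) G cs = (\<exists>\<Gamma> \<Delta>. cs = [\<Gamma> + {#A#}, \<Delta> + {#dual A#}] \<and> G = \<Gamma> + \<Delta>)"
| "rule_ok (RTens A B) G cs = (\<exists>\<Gamma> \<Delta>. cs = [\<Gamma> + {#A#}, \<Delta> + {#B#}] \<and> G = \<Gamma> + \<Delta> + {#Tens A B#})"
| "rule_ok (RPar A B) G cs = (\<exists>\<Gamma>. cs = [\<Gamma> + {#A, B#}] \<and> G = \<Gamma> + {#Par A B#})"
| "rule_ok ROne G cs = (cs = [] \<and> G = {#One#})"
| "rule_ok RBot G cs = (\<exists>\<Gamma>. cs = [\<Gamma>] \<and> G = \<Gamma> + {#Bot#})"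
| "rule_ok (RWk A) G cs = (\<exists>\<Gamma>. cs = [\<Gamma>] \<and> G = \<Gamma> + {#Wn A#})"
| "rule_ok (RAbs A) G cs = (\<exists>\<Gamma>. cs = [\<Gamma> + {#A, Wn A#}] \<and> G = \<Gamma> + {#Wn A#})"
| "rule_ok (RAll A) G cs = (\<exists>\<Gamma>. cs = [image_mset (lift 0) \<Gamma> + {#A#}] \<and> G = \<Gamma> + {#All A#})"
| "rule_ok (REx A B) G cs = (exp_free B \<and> (\<exists>\<Gamma>. cs = [\<Gamma> + {#subst 0 B A#}] \<and> G = \<Gamma> + {#Ex A#}))"
| "rule_ok (RCp A) G cs = (\<exists>\<Gamma>. cs = [\<Gamma> + {#A#}, image_mset Wn \<Gamma> + {#Bang A#}]
                                 \<and> G = image_mset Wn \<Gamma> + {#Bang A#})"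
| "rule_ok RHyp G cs = (cs = [])"

inductive valid :: "deriv \<Rightarrow> bool" where
  "rule_ok r G (map concl ps) \<Longrightarrow> (\<forall>p\<in>set ps. valid p) \<Longrightarrow> valid (Der r G ps)"

fun dsize :: "deriv \<Rightarrow> nat" where
  "dsize (Der r G ps) = Suc (sum_list (map dsize ps))"

fun nodes :: "deriv \<Rightarrow> (rule \<times> form multiset) list" where
  "nodes (Der r G ps) = (r, G) # concat (map nodes ps)"

definition S :: "deriv \<Rightarrow> nat" where
  "S D = Max (insert 0 {size (filter_mset is_Wn G) | A G. (RCp A, G) \<in> set (nodes D)})"

fun is_cut :: "rule \<Rightarrow> bool" where
  "is_cut (RCut A) = True"
| "is_cut _ = False"

definition cut_free :: "deriv \<Rightarrow> bool" where
  "cut_free D \<longleftrightarrow> (\<forall>(r, G) \<in> set (nodes D). \<not> is_cut r)"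

fun rlift :: "nat \<Rightarrow> rule \<Rightarrow> rule" where
  "rlift k RAx = RAx"
| "rlift k (RCut A) = RCut (lift k A)"
| "rlift k (RTens A B) = RTens (lift k A) (lift k B)"
| "rlift k (RPar A B) = RPar (lift k A) (lift k B)"
| "rlift k ROne = ROne"
| "rlift k RBot = RBot"
| "rlift k (RWk A) = RWk (lift k A)"
| "rlift k (RAbs A) = RAbs (lift k A)"
| "rlift k (RAll A) = RAll (lift (Suc k) A)"
| "rlift k (REx A B) = REx (lift (Suc k) A) (lift k B)"
| "rlift k (RCp A) = RCp (lift k A)"
| "rlift k RHyp = RHyp"

fun rsubst :: "nat \<Rightarrow> form \<Rightarrow> rule \<Rightarrow> rule" where
  "rsubst k C RAx = RAx"
| "rsubst k C (RCut A) = RCut (subst k C A)"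
| "rsubst k C (RTens A B) = RTens (subst k C A) (subst k C B)"
| "rsubst k C (RPar A B) = RPar (subst k C A) (subst k C B)"
| "rsubst k C ROne = ROne"
| "rsubst k C RBot = RBot"
| "rsubst k C (RWk A) = RWk (subst k C A)"
| "rsubst k C (RAbs A) = RAbs (subst k C A)"
| "rsubst k C (RAll A) = RAll (subst (Suc k) (lift 0 C) A)"
| "rsubst k C (REx A B) = REx (subst (Suc k) (lift 0 C) A) (subst k C B)"
| "rsubst k C (RCp A) = RCp (subst k C A)"
| "rsubst k C RHyp = RHyp"

fun is_All_rule :: "rule \<Rightarrow> bool" where
  "is_All_rule (RAll A) = True"
| "is_All_rule _ = False"

text \<open>Shift free variables (index >= k) of a whole derivation; premises of a
  forall-rule live under one more binder.\<close>
fun dlift :: "nat \<Rightarrow> deriv \<Rightarrow> deriv" where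
  "dlift k (Der r G ps) =
     Der (rlift k r) (image_mset (lift k) G)
         (map (\<lambda>p. dlift (if is_All_rule r then Suc k else k) p) ps)"

fun dsubst :: "nat \<Rightarrow> form \<Rightarrow> deriv \<Rightarrow> deriv" where
  "dsubst k C (Der r G ps) =
     Der (rsubst k C r) (image_mset (subst k C) G)
         (map (\<lambda>p. dsubst (if is_All_rule r then Suc k else k)
                             (if is_All_rule r then lift 0 C else C) p) ps)"

section \<open>Cut-elimination steps\<close>

definition mk_cut :: "form \<Rightarrow> deriv \<Rightarrow> deriv \<Rightarrow> deriv" where
  "mk_cut A p q = Der (RCut A) ((concl p - {#A#}) + (concl q - {#dual A#})) [p, q]"

fun wk_list :: "form list \<Rightarrow> deriv \<Rightarrow> deriv" where
  "wk_list [] d = d"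
| "wk_list (w # ws) d = (let d' = wk_list ws d in Der (RWk w) (concl d' + {#Wn w#}) [d'])"

fun abs_list :: "form list \<Rightarrow> deriv \<Rightarrow> deriv" where
  "abs_list [] d = d"
| "abs_list (w # ws) d = (let d' = abs_list ws d in Der (RAbs w) (concl d' - {#w#}) [d'])"

text \<open>The Boolean flag is True for principal
  (i.e. non-commutative) steps and False for commutative steps.
  In each case the left premise D1 carries the cut formula A and the right
  premise D2 carries dual A; the last rule allows both orientations.\<close>
inductive root_step :: "bool \<Rightarrow> deriv \<Rightarrow> deriv \<Rightarrow> bool" where
  ax: "concl D1 = {#A, dual A#} \<Longrightarrow> D1 = Der RAx (concl D1) [] \<Longrightarrow>
       root_step True (Der (RCut A) G [D1, D2]) D2"
| tens_par: "root_step True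
      (Der (RCut (Tens B C)) G [Der (RTens B C) G1 [p, q], Der (RPar (dual B) (dual C)) G2 [r]])
      (mk_cut C q (mk_cut B p r))"
| one_bot: "root_step True (Der (RCut One) G [Der ROne G1 [], Der RBot G2 [r]]) r"
| all_ex: "root_step True
      (Der (RCut (All B)) G [Der (RAll B) G1 [p], Der (REx (dual B) C) G2 [r]])
      (mk_cut (subst 0 C B) (dsubst 0 C p) r)"
| cp_cp: "root_step True
      (Der (RCut (Wn E)) G [Der (RCp B) G1 [p1, p2], Der (RCp (dual E)) G2 [q1, q2]])
      (Der (RCp B) G [mk_cut E p1 q1, mk_cut (Wn E) p2 q2])"
| cp_wk: "image_mset Wn (mset ws) = G1 - {#Bang B#} \<Longrightarrow> root_step True
      (Der (RCut (Bang B)) G [Der (RCp B) G1 [p1, p2], Der (RWk (dual B)) G2 [r]])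
      (wk_list ws r)"
| cp_abs1: "image_mset Wn (mset ws) = G1 - {#Bang B#} \<Longrightarrow> root_step True
      (Der (RCut (Bang B)) G [Der (RCp B) G1 [p1, p2], Der (RAbs (dual B)) G2 [r]])
      (abs_list ws (mk_cut B p1 (mk_cut (Bang B) p2 r)))"
| cp_abs2: "image_mset Wn (mset ws) = G1 - {#Bang B#} \<Longrightarrow> root_step True
      (Der (RCut (Bang B)) G [Der (RCp B) G1 [p1, p2], Der (RAbs (dual B)) G2 [r]])
      (abs_list ws (mk_cut (Bang B) p2 (mk_cut B p1 r)))"
  \<comment> \<open>commutative steps: permute the cut above the last (non-cut, non-cp) rule of D1,
     when the cut formula A belongs to the context of that rule\<close>
| c_tens1: "A \<in># concl p - {#B#} \<Longrightarrow> root_step False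
      (Der (RCut A) G [Der (RTens B C) G1 [p, q], D2])
      (Der (RTens B C) G [mk_cut A p D2, q])"
| c_tens2: "A \<in># concl q - {#C#} \<Longrightarrow> root_step False
      (Der (RCut A) G [Der (RTens B C) G1 [p, q], D2])
      (Der (RTens B C) G [p, mk_cut A q D2])"
| c_par: "A \<in># concl p - {#B, C#} \<Longrightarrow> root_step False
      (Der (RCut A) G [Der (RPar B C) G1 [p], D2])
      (Der (RPar B C) G [mk_cut A p D2])"
| c_bot: "A \<in># concl p \<Longrightarrow> root_step False
      (Der (RCut A) G [Der RBot G1 [p], D2])
      (Der RBot G [mk_cut A p D2])"
| c_wk: "A \<in># concl p \<Longrightarrow> root_step False
      (Der (RCut A) G [Der (RWk B) G1 [p], D2])
      (Der (RWk B) G [mk_cut A p D2])"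
| c_abs: "A \<in># concl p - {#B, Wn B#} \<Longrightarrow> root_step False
      (Der (RCut A) G [Der (RAbs B) G1 [p], D2])
      (Der (RAbs B) G [mk_cut A p D2])"
| c_ex: "A \<in># concl p - {#subst 0 C B#} \<Longrightarrow> root_step False
      (Der (RCut A) G [Der (REx B C) G1 [p], D2])
      (Der (REx B C) G [mk_cut A p D2])"
| c_all: "A \<in># G1 - {#All B#} \<Longrightarrow> root_step False
      (Der (RCut A) G [Der (RAll B) G1 [p], D2])
      (Der (RAll B) G [mk_cut (lift 0 A) p (dlift 0 D2)])"
| c_hyp: "A \<in># G1 \<Longrightarrow> root_step False
      (Der (RCut A) G [Der RHyp G1 [], D2])
      (Der RHyp G [])"
| sym: "root_step b (Der (RCut (dual A)) G [D2, D1]) D' \<Longrightarrow>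
        root_step b (Der (RCut A) G [D1, D2]) D'"

inductive step :: "bool \<Rightarrow> deriv \<Rightarrow> deriv \<Rightarrow> bool" where
  root: "root_step b D D' \<Longrightarrow> step b D D'"
| ctxt: "i < length ps \<Longrightarrow> step b (ps ! i) D' \<Longrightarrow>
         step b (Der r G ps) (Der r G (ps[i := D']))"

definition cut_step :: "deriv \<Rightarrow> deriv \<Rightarrow> bool" where
  "cut_step D D' \<longleftrightarrow> step True D D' \<or> step False D D'"

definition principal_step :: "deriv \<Rightarrow> deriv \<Rightarrow> bool" where
  "principal_step D D' \<longleftrightarrow> step True D D'"

definition red_seq :: "(deriv \<Rightarrow> deriv \<Rightarrow> bool) \<Rightarrow> deriv list \<Rightarrow> bool" where
  "red_seq R Ds \<longleftrightarrow> Ds \<noteq> [] \<and> (\<forall>i. Suc i < length Ds \<longrightarrow> R (Ds ! i) (Ds ! Suc i))"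

end

theory Submission
  imports Defs
begin

lemma dual_dual[simp]: "dual (dual A) = A" by (induct A) auto
lemma lift_dual: "lift k (dual A) = dual (lift k A)" by (induct A arbitrary: k) auto
lemma subst_dual: "subst k C (dual A) = dual (subst k C A)"
  by (induct A arbitrary: k C) (auto simp: lift_dual)
lemma lift_lift: "j \<le> k \<Longrightarrow> lift (Suc k) (lift j A) = lift j (lift k A)"
  by (induct A arbitrary: j k) auto
lemma lift_lift0: "lift 0 (lift j A) = lift (Suc j) (lift 0 A)"
  using lift_lift[of 0 j A] by simp
lemma subst_lift_same: "subst j B (lift j A) = A"
  by (induct A arbitrary: j B) auto
lemma subst_lift_comm: "j \<le> k \<Longrightarrow> subst (Suc k) (lift j C) (lift j A) = lift j (subst k C A)"
proof (induct A arbitrary: j k C)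
  case (All A)
  show ?case using All(1)[where j="Suc j" and k="Suc k" and C="lift 0 C"] All(2)
    by (simp add: lift_lift0)
next
  case (Ex A)
  show ?case using Ex(1)[where j="Suc j" and k="Suc k" and C="lift 0 C"] Ex(2)
    by (simp add: lift_lift0)
qed (auto simp: lift_dual)
lemma subst_lift_comm0: "subst (Suc k) (lift 0 C) (lift 0 A) = lift 0 (subst k C A)"
  using subst_lift_comm[of 0 k] by simp
lemma lift_subst: "j \<le> k \<Longrightarrow> lift k (subst j B A) = subst j (lift k B) (lift (Suc k) A)"
proof (induct A arbitrary: j k B)
  case (All A)
  show ?case using All(1)[where j="Suc j" and k="Suc k" and B="lift 0 B"] All(2)
    by (simp add: lift_lift0)
next
  case (Ex A)
  show ?case using Ex(1)[where j="Suc j" and k="Suc k" and B="lift 0 B"] Ex(2)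
    by (simp add: lift_lift0)
qed (auto simp: lift_dual)
lemma subst_subst: "subst (j+k) C (subst j B A) = subst j (subst (j+k) C B) (subst (Suc (j+k)) (lift j C) A)"
proof (induct A arbitrary: j k B C)
  case (All A)
  show ?case using All[where j="Suc j" and k=k and B="lift 0 B" and C="lift 0 C"]
    by (simp add: subst_lift_comm0 lift_lift0)
next
  case (Ex A)
  show ?case using Ex[where j="Suc j" and k=k and B="lift 0 B" and C="lift 0 C"]
    by (simp add: subst_lift_comm0 lift_lift0)
qed (auto simp: subst_lift_same subst_dual lift_dual)

fun rok :: "rule \<Rightarrow> form multiset \<Rightarrow> form multiset list \<Rightarrow> bool" where
  "rok RAx G cs = (cs = [] \<and> (\<exists>X. G = {#X, dual X#}))"
| "rok (REx A B) G cs = (\<exists>\<Gamma>. cs = [\<Gamma> + {#subst 0 B A#}] \<and> G = \<Gamma> + {#Ex A#})"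
| "rok r G cs = rule_ok r G cs"

fun gv :: "deriv \<Rightarrow> bool" where
  "gv (Der r G ps) = (rok r G (map concl ps) \<and> (\<forall>p\<in>set ps. gv p))"

lemma valid_gv: "valid D \<Longrightarrow> gv D"
proof (induct rule: valid.induct)
  case (1 r G ps)
  then show ?case
  proof (cases r)
    case RAx
    with 1 show ?thesis by (auto, metis dual.simps(1))
  qed auto
qed

lemma concl_dsubst: "concl (dsubst k C D) = image_mset (subst k C) (concl D)"
  by (cases D) auto
lemma concl_dlift: "concl (dlift k D) = image_mset (lift k) (concl D)"
  by (cases D) auto

lemma rok_subst:
  assumes "rok r G cs"
  shows "rok (rsubst k C r) (image_mset (subst k C) G)
     (map (image_mset (subst (if is_All_rule r then Suc k else k) (if is_All_rule r then lift 0 C else C))) cs)"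
  using assms
  by (cases r) (auto simp: subst_dual subst_lift_comm0 image_mset.compositionality o_def
      subst_subst[of 0 k, simplified])

lemma rok_lift:
  assumes "rok r G cs"
  shows "rok (rlift k r) (image_mset (lift k) G)
     (map (image_mset (lift (if is_All_rule r then Suc k else k))) cs)"
  using assms
  by (cases r) (auto simp: lift_dual lift_lift0 image_mset.compositionality o_def
      lift_subst[of 0 k, simplified])

lemma gv_dsubst: "gv D \<Longrightarrow> gv (dsubst k C D)"
proof (induct D arbitrary: k C)
  case (Der r G ps)
  have "rok (rsubst k C r) (image_mset (subst k C) G)
     (map (image_mset (subst (if is_All_rule r then Suc k else k) (if is_All_rule r then lift 0 C else C))) (map concl ps))"
    using Der(2) by (intro rok_subst) simp
  moreover have "map concl (map (\<lambda>p. dsubst (if is_All_rule r then Suc k else k)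
                             (if is_All_rule r then lift 0 C else C) p) ps) =
     map (image_mset (subst (if is_All_rule r then Suc k else k) (if is_All_rule r then lift 0 C else C))) (map concl ps)"
    by (simp add: concl_dsubst)
  moreover have "\<And>k C. concl \<circ> dsubst k C = image_mset (subst k C) \<circ> concl"
    by (rule ext) (simp add: concl_dsubst)
  ultimately show ?case using Der by (auto simp del: rok.simps)
qed

lemma gv_dlift: "gv D \<Longrightarrow> gv (dlift k D)"
proof (induct D arbitrary: k)
  case (Der r G ps)
  have "rok (rlift k r) (image_mset (lift k) G)
     (map (image_mset (lift (if is_All_rule r then Suc k else k))) (map concl ps))"
    using Der(2) by (intro rok_lift) simp
  moreover have "map concl (map (\<lambda>p. dlift (if is_All_rule r then Suc k else k) p) ps) =
     map (image_mset (lift (if is_All_rule r then Suc k else k))) (map concl ps)"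
    by (simp add: concl_dlift)
  moreover have "\<And>k. concl \<circ> dlift k = image_mset (lift k) \<circ> concl"
    by (rule ext) (simp add: concl_dlift)
  ultimately show ?case using Der by (auto simp del: rok.simps)
qed

lemma gv_mk_cut:
  assumes "gv p" "gv q" "A \<in># concl p" "dual A \<in># concl q"
  shows "gv (mk_cut A p q)" "concl (mk_cut A p q) = (concl p - {#A#}) + (concl q - {#dual A#})"
proof -
  show "concl (mk_cut A p q) = (concl p - {#A#}) + (concl q - {#dual A#})" by (simp add: mk_cut_def)
  obtain P where P: "concl p = add_mset A P" using assms(3) by (metis multi_member_split)
  obtain Q where Q: "concl q = add_mset (dual A) Q" using assms(4) by (metis multi_member_split)
  show "gv (mk_cut A p q)" using assms unfolding mk_cut_def
    by (simp add: P Q)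
qed

lemma gv_wk_list: "gv r \<Longrightarrow> gv (wk_list ws r) \<and> concl (wk_list ws r) = concl r + image_mset Wn (mset ws)"
  by (induct ws) (auto simp: Let_def)

lemma sub_diff: "A + B \<subseteq># C \<Longrightarrow> B \<subseteq># C - (A::'a multiset)"
proof -
  assume a: "A + B \<subseteq># C"
  show ?thesis unfolding subseteq_mset_def
  proof
    fix x
    have "count A x + count B x \<le> count C x" using a unfolding subseteq_mset_def
      by (metis count_union)
    then show "count B x \<le> count (C - A) x" by simp
  qed
qed

lemma gv_abs_list: "gv d \<Longrightarrow> mset ws + image_mset Wn (mset ws) \<subseteq># concl d \<Longrightarrow>
   gv (abs_list ws d) \<and> concl (abs_list ws d) = concl d - mset ws"
proof (induct ws)
  case Nil
  then show ?case by simp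
next
  case (Cons w ws)
  have sub: "mset ws + image_mset Wn (mset ws) \<subseteq># concl d"
    using Cons(3) by (rule subset_mset.order_trans[rotated]) (simp add: subset_mset.add_mono)
  with Cons have IH: "gv (abs_list ws d)" "concl (abs_list ws d) = concl d - mset ws" by auto
  have "mset ws + ({#w, Wn w#} + image_mset Wn (mset ws)) \<subseteq># concl d"
    using Cons(3) by (simp add: add_mset_commute)
  then have "{#w, Wn w#} + image_mset Wn (mset ws) \<subseteq># concl d - mset ws"
    by (rule sub_diff)
  then have w: "{#w, Wn w#} \<subseteq># concl d - mset ws"
    by (metis mset_subset_eq_add_left subset_mset.order_trans)
  obtain R where R: "concl d - mset ws = add_mset w (add_mset (Wn w) R)"
    using w by (metis subset_mset.add_diff_inverse add_mset_add_single add.commute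
       add_mset_commute empty_neutral(1) union_mset_add_mset_left)
  have e: "concl d - add_mset w (mset ws) = concl d - mset ws - {#w#}"
    by (metis add_mset_add_single diff_diff_add_mset)
  show ?case using IH R
    by (auto simp: Let_def add_mset_commute e)
qed

lemma gv_cut_iff: "gv (Der (RCut A) G [D1, D2]) \<longleftrightarrow> gv D1 \<and> gv D2 \<and> A \<in># concl D1 \<and> dual A \<in># concl D2 \<and>
   G = (concl D1 - {#A#}) + (concl D2 - {#dual A#})"
proof
  assume "gv (Der (RCut A) G [D1, D2])"
  then show "gv D1 \<and> gv D2 \<and> A \<in># concl D1 \<and> dual A \<in># concl D2 \<and>
   G = (concl D1 - {#A#}) + (concl D2 - {#dual A#})" by auto
next
  assume a: "gv D1 \<and> gv D2 \<and> A \<in># concl D1 \<and> dual A \<in># concl D2 \<and>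
   G = (concl D1 - {#A#}) + (concl D2 - {#dual A#})"
  obtain P where P: "concl D1 = add_mset A P" using a by (metis multi_member_split)
  obtain Q where Q: "concl D2 = add_mset (dual A) Q" using a by (metis multi_member_split)
  show "gv (Der (RCut A) G [D1, D2])" using a P Q by simp
qed

fun unWn :: "form \<Rightarrow> form" where "unWn (Wn A) = A" | "unWn A = A"

lemma image_Wn_inj: "image_mset Wn X = image_mset Wn Y \<Longrightarrow> X = Y"
proof -
  assume "image_mset Wn X = image_mset Wn Y"
  then have "image_mset unWn (image_mset Wn X) = image_mset unWn (image_mset Wn Y)" by simp
  then show ?thesis by (simp add: multiset.map_comp o_def)
qed

lemma image_subst_lift: "image_mset (subst 0 C) (image_mset (lift 0) X) = X"
  by (simp add: multiset.map_comp o_def subst_lift_same)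

lemma root_step_gv: "root_step b D D' \<Longrightarrow> gv D \<Longrightarrow> gv D' \<and> concl D' = concl D"
proof (induct rule: root_step.induct)
  case (ax D1 A G D2)
  then show ?case by (auto simp: gv_cut_iff)
next
  case (tens_par B C G G1 p q G2 r)
  from tens_par obtain \<Gamma>1 \<Delta>1 where t: "concl p = add_mset B \<Gamma>1" "concl q = add_mset C \<Delta>1"
     "G1 = add_mset (Tens B C) (\<Gamma>1 + \<Delta>1)" "gv p" "gv q" by auto
  from tens_par obtain \<Gamma>2 where pr: "concl r = add_mset (dual B) (add_mset (dual C) \<Gamma>2)"
     "G2 = add_mset (Par (dual B) (dual C)) \<Gamma>2" "gv r" by auto
  from tens_par have G: "G = \<Gamma>1 + \<Delta>1 + \<Gamma>2" using t pr by (auto simp: gv_cut_iff)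
  have c1: "gv (mk_cut B p r)" "concl (mk_cut B p r) = \<Gamma>1 + add_mset (dual C) \<Gamma>2"
    using gv_mk_cut[of p r B] t pr by auto
  have c2: "gv (mk_cut C q (mk_cut B p r))" "concl (mk_cut C q (mk_cut B p r)) = \<Delta>1 + (\<Gamma>1 + \<Gamma>2)"
    using gv_mk_cut[of q "mk_cut B p r" C] t c1 by auto
  show ?case using c2 G by (simp add: ac_simps)
next
  case (one_bot G G1 G2 r)
  then show ?case by (auto simp: gv_cut_iff)
next
  case (all_ex B G G1 p C G2 r)
  from all_ex obtain \<Gamma> where a: "concl p = add_mset B (image_mset (lift 0) \<Gamma>)" "G1 = add_mset (All B) \<Gamma>" "gv p" by auto
  from all_ex obtain \<Delta> where e: "concl r = add_mset (subst 0 C (dual B)) \<Delta>" "G2 = add_mset (Ex (dual B)) \<Delta>" "gv r" by auto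
  from all_ex have G: "G = \<Gamma> + \<Delta>" using a e by (auto simp: gv_cut_iff)
  have s: "gv (dsubst 0 C p)" "concl (dsubst 0 C p) = add_mset (subst 0 C B) \<Gamma>"
    using a gv_dsubst[of p 0 C] by (auto simp: concl_dsubst image_subst_lift)
  show ?case using gv_mk_cut[of "dsubst 0 C p" r "subst 0 C B"] s e G by (auto simp: subst_dual)
next
  case (cp_cp E G B G1 p1 p2 G2 q1 q2)
  from cp_cp obtain \<Gamma>1 where c1: "concl p1 = add_mset B \<Gamma>1" "concl p2 = add_mset (Bang B) (image_mset Wn \<Gamma>1)"
    "G1 = add_mset (Bang B) (image_mset Wn \<Gamma>1)" "gv p1" "gv p2" by auto
  from cp_cp obtain \<Gamma>2 where c2: "concl q1 = add_mset (dual E) \<Gamma>2" "concl q2 = add_mset (Bang (dual E)) (image_mset Wn \<Gamma>2)"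
    "G2 = add_mset (Bang (dual E)) (image_mset Wn \<Gamma>2)" "gv q1" "gv q2" by auto
  have cut: "Wn E \<in># G1" "G = (G1 - {#Wn E#}) + (G2 - {#Bang (dual E)#})"
    using cp_cp[unfolded gv_cut_iff] by simp_all
  then have "E \<in># \<Gamma>1" using c1 by auto
  then obtain \<Gamma>1' where g1: "\<Gamma>1 = add_mset E \<Gamma>1'" by (metis multi_member_split)
  have G: "G = add_mset (Bang B) (image_mset Wn \<Gamma>1' + image_mset Wn \<Gamma>2)" using cut c1 c2 g1 by simp
  have k1: "gv (mk_cut E p1 q1)" "concl (mk_cut E p1 q1) = add_mset B (\<Gamma>1' + \<Gamma>2)"
    using gv_mk_cut[of p1 q1 E] c1 c2 g1 by auto
  have k2: "gv (mk_cut (Wn E) p2 q2)" "concl (mk_cut (Wn E) p2 q2) = G"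
    using gv_mk_cut[of p2 q2 "Wn E"] c1 c2 g1 G by auto
  show ?case using k1 k2 G by auto
next
  case (cp_wk ws G1 B G p1 p2 G2 r)
  from cp_wk have w: "G2 = add_mset (Wn (dual B)) (concl r)" "gv r" by auto
  from cp_wk have cut: "G = (G1 - {#Bang B#}) + (G2 - {#Wn (dual B)#})" by (auto simp: gv_cut_iff)
  show ?case using gv_wk_list[of r ws] w cut cp_wk(1) by (simp add: ac_simps)
next
  case (cp_abs1 ws G1 B G p1 p2 G2 r)
  from cp_abs1 obtain \<Gamma>1 where c1: "concl p1 = add_mset B \<Gamma>1" "concl p2 = add_mset (Bang B) (image_mset Wn \<Gamma>1)"
    "G1 = add_mset (Bang B) (image_mset Wn \<Gamma>1)" "gv p1" "gv p2" by auto
  have ws: "mset ws = \<Gamma>1" using cp_abs1(1) c1 by (auto intro: image_Wn_inj)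
  from cp_abs1 obtain \<Delta> where a: "concl r = add_mset (dual B) (add_mset (Wn (dual B)) \<Delta>)"
    "G2 = add_mset (Wn (dual B)) \<Delta>" "gv r" by auto
  from cp_abs1 have G: "G = image_mset Wn \<Gamma>1 + \<Delta>" using c1 a by (auto simp: gv_cut_iff)
  have k1: "gv (mk_cut (Bang B) p2 r)" "concl (mk_cut (Bang B) p2 r) = image_mset Wn \<Gamma>1 + add_mset (dual B) \<Delta>"
    using gv_mk_cut[of p2 r "Bang B"] c1 a by auto
  have k2: "gv (mk_cut B p1 (mk_cut (Bang B) p2 r))"
     "concl (mk_cut B p1 (mk_cut (Bang B) p2 r)) = \<Gamma>1 + (image_mset Wn \<Gamma>1 + \<Delta>)"
    using gv_mk_cut[of p1 "mk_cut (Bang B) p2 r" B] c1 k1 by auto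
  show ?case using gv_abs_list[of "mk_cut B p1 (mk_cut (Bang B) p2 r)" ws] k2 ws G by simp
next
  case (cp_abs2 ws G1 B G p1 p2 G2 r)
  from cp_abs2 obtain \<Gamma>1 where c1: "concl p1 = add_mset B \<Gamma>1" "concl p2 = add_mset (Bang B) (image_mset Wn \<Gamma>1)"
    "G1 = add_mset (Bang B) (image_mset Wn \<Gamma>1)" "gv p1" "gv p2" by auto
  have ws: "mset ws = \<Gamma>1" using cp_abs2(1) c1 by (auto intro: image_Wn_inj)
  from cp_abs2 obtain \<Delta> where a: "concl r = add_mset (dual B) (add_mset (Wn (dual B)) \<Delta>)"
    "G2 = add_mset (Wn (dual B)) \<Delta>" "gv r" by auto
  from cp_abs2 have G: "G = image_mset Wn \<Gamma>1 + \<Delta>" using c1 a by (auto simp: gv_cut_iff)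
  have k1: "gv (mk_cut B p1 r)" "concl (mk_cut B p1 r) = \<Gamma>1 + add_mset (Wn (dual B)) \<Delta>"
    using gv_mk_cut[of p1 r B] c1 a by auto
  have k2: "gv (mk_cut (Bang B) p2 (mk_cut B p1 r))"
     "concl (mk_cut (Bang B) p2 (mk_cut B p1 r)) = \<Gamma>1 + (image_mset Wn \<Gamma>1 + \<Delta>)"
    using gv_mk_cut[of p2 "mk_cut B p1 r" "Bang B"] c1 k1 by (auto simp: ac_simps)
  show ?case using gv_abs_list[of "mk_cut (Bang B) p2 (mk_cut B p1 r)" ws] k2 ws G by simp
next
  case (c_tens1 A p B G C G1 q D2)
  from c_tens1 obtain \<Gamma>1 \<Delta>1 where t: "concl p = add_mset B \<Gamma>1" "concl q = add_mset C \<Delta>1"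
     "G1 = add_mset (Tens B C) (\<Gamma>1 + \<Delta>1)" "gv p" "gv q" by auto
  have cut: "G = (G1 - {#A#}) + (concl D2 - {#dual A#})" "dual A \<in># concl D2" "gv D2" using c_tens1[unfolded gv_cut_iff] by simp_all
  obtain R where R: "concl D2 = add_mset (dual A) R" using cut(2) by (metis multi_member_split)
  have "A \<in># \<Gamma>1" using c_tens1(1) t by simp
  then obtain \<Gamma>1' where g: "\<Gamma>1 = add_mset A \<Gamma>1'" by (metis multi_member_split)
  have k: "gv (mk_cut A p D2)" "concl (mk_cut A p D2) = add_mset B (\<Gamma>1' + R)"
    using gv_mk_cut[of p D2 A] t g cut(3) R by auto
  have G: "G = add_mset (Tens B C) (\<Gamma>1' + R + \<Delta>1)"
    using cut(1) t g R by (simp add: add_mset_commute[of A] del: gv.simps)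
  show ?case using k t G by (simp add: ac_simps)
next
  case (c_tens2 A q C G B G1 p D2)
  from c_tens2 obtain \<Gamma>1 \<Delta>1 where t: "concl p = add_mset B \<Gamma>1" "concl q = add_mset C \<Delta>1"
     "G1 = add_mset (Tens B C) (\<Gamma>1 + \<Delta>1)" "gv p" "gv q" by auto
  have cut: "G = (G1 - {#A#}) + (concl D2 - {#dual A#})" "dual A \<in># concl D2" "gv D2" using c_tens2[unfolded gv_cut_iff] by simp_all
  obtain R where R: "concl D2 = add_mset (dual A) R" using cut(2) by (metis multi_member_split)
  have "A \<in># \<Delta>1" using c_tens2(1) t by simp
  then obtain \<Delta>1' where g: "\<Delta>1 = add_mset A \<Delta>1'" by (metis multi_member_split)
  have k: "gv (mk_cut A q D2)" "concl (mk_cut A q D2) = add_mset C (\<Delta>1' + R)"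
    using gv_mk_cut[of q D2 A] t g cut(3) R by auto
  have G: "G = add_mset (Tens B C) (\<Gamma>1 + (\<Delta>1' + R))"
    using cut(1) t g R by (simp add: add_mset_commute[of A] del: gv.simps)
  show ?case using k t G by (simp add: ac_simps)
next
  case (c_par A p B C G G1 D2)
  from c_par obtain \<Gamma>1 where t: "concl p = add_mset B (add_mset C \<Gamma>1)" "G1 = add_mset (Par B C) \<Gamma>1" "gv p" by auto
  have cut: "G = (G1 - {#A#}) + (concl D2 - {#dual A#})" "dual A \<in># concl D2" "gv D2" using c_par[unfolded gv_cut_iff] by simp_all
  obtain R where R: "concl D2 = add_mset (dual A) R" using cut(2) by (metis multi_member_split)
  have "A \<in># \<Gamma>1" using c_par(1) t by simp
  then obtain \<Gamma>1' where g: "\<Gamma>1 = add_mset A \<Gamma>1'" by (metis multi_member_split)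
  have k: "gv (mk_cut A p D2)" "concl (mk_cut A p D2) = add_mset B (add_mset C (\<Gamma>1' + R))"
    using gv_mk_cut[of p D2 A] t g cut(3) R by auto
  have G: "G = add_mset (Par B C) (\<Gamma>1' + R)"
    using cut(1) t g R by (simp add: add_mset_commute[of A] del: gv.simps)
  show ?case using k t G by (simp add: ac_simps)
next
  case (c_bot A p G G1 D2)
  from c_bot have t: "G1 = add_mset Bot (concl p)" "gv p" by auto
  have cut: "G = (G1 - {#A#}) + (concl D2 - {#dual A#})" "dual A \<in># concl D2" "gv D2" using c_bot[unfolded gv_cut_iff] by simp_all
  obtain R where R: "concl D2 = add_mset (dual A) R" using cut(2) by (metis multi_member_split)
  obtain P where g: "concl p = add_mset A P" using c_bot(1) by (metis multi_member_split)
  have k: "gv (mk_cut A p D2)" "concl (mk_cut A p D2) = P + R"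
    using gv_mk_cut[of p D2 A] t g cut(3) R by auto
  have G: "G = add_mset Bot (P + R)"
    using cut(1) t g R by (simp add: add_mset_commute[of A] del: gv.simps)
  show ?case using k t G by (simp add: ac_simps)
next
  case (c_wk A p G B G1 D2)
  from c_wk have t: "G1 = add_mset (Wn B) (concl p)" "gv p" by auto
  have cut: "G = (G1 - {#A#}) + (concl D2 - {#dual A#})" "dual A \<in># concl D2" "gv D2" using c_wk[unfolded gv_cut_iff] by simp_all
  obtain R where R: "concl D2 = add_mset (dual A) R" using cut(2) by (metis multi_member_split)
  obtain P where g: "concl p = add_mset A P" using c_wk(1) by (metis multi_member_split)
  have k: "gv (mk_cut A p D2)" "concl (mk_cut A p D2) = P + R"
    using gv_mk_cut[of p D2 A] t g cut(3) R by auto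
  have G: "G = add_mset (Wn B) (P + R)"
    using cut(1) t g R by (simp add: add_mset_commute[of A] del: gv.simps)
  show ?case using k t G by (simp add: ac_simps)
next
  case (c_abs A p B G G1 D2)
  from c_abs obtain \<Gamma>1 where t: "concl p = add_mset B (add_mset (Wn B) \<Gamma>1)" "G1 = add_mset (Wn B) \<Gamma>1" "gv p" by auto
  have cut: "G = (G1 - {#A#}) + (concl D2 - {#dual A#})" "dual A \<in># concl D2" "gv D2" using c_abs[unfolded gv_cut_iff] by simp_all
  obtain R where R: "concl D2 = add_mset (dual A) R" using cut(2) by (metis multi_member_split)
  have "A \<in># \<Gamma>1" using c_abs(1) t by simp
  then obtain \<Gamma>1' where g: "\<Gamma>1 = add_mset A \<Gamma>1'" by (metis multi_member_split)
  have k: "gv (mk_cut A p D2)" "concl (mk_cut A p D2) = add_mset B (add_mset (Wn B) (\<Gamma>1' + R))"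
    using gv_mk_cut[of p D2 A] t g cut(3) R by auto
  have G: "G = add_mset (Wn B) (\<Gamma>1' + R)"
    using cut(1) t g R by (simp add: add_mset_commute[of A] del: gv.simps)
  show ?case using k t G by (simp add: ac_simps)
next
  case (c_ex A p C B G G1 D2)
  from c_ex obtain \<Gamma>1 where t: "concl p = add_mset (subst 0 C B) \<Gamma>1" "G1 = add_mset (Ex B) \<Gamma>1" "gv p" by auto
  have cut: "G = (G1 - {#A#}) + (concl D2 - {#dual A#})" "dual A \<in># concl D2" "gv D2" using c_ex[unfolded gv_cut_iff] by simp_all
  obtain R where R: "concl D2 = add_mset (dual A) R" using cut(2) by (metis multi_member_split)
  have "A \<in># \<Gamma>1" using c_ex(1) t by simp
  then obtain \<Gamma>1' where g: "\<Gamma>1 = add_mset A \<Gamma>1'" by (metis multi_member_split)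
  have k: "gv (mk_cut A p D2)" "concl (mk_cut A p D2) = add_mset (subst 0 C B) (\<Gamma>1' + R)"
    using gv_mk_cut[of p D2 A] t g cut(3) R by auto
  have G: "G = add_mset (Ex B) (\<Gamma>1' + R)"
    using cut(1) t g R by (simp add: add_mset_commute[of A] del: gv.simps)
  show ?case using k t G by (simp add: ac_simps)
next
  case (c_all A G1 B G p D2)
  from c_all obtain \<Gamma>1 where t: "concl p = add_mset B (image_mset (lift 0) \<Gamma>1)" "G1 = add_mset (All B) \<Gamma>1" "gv p" by auto
  have cut: "G = (G1 - {#A#}) + (concl D2 - {#dual A#})" "dual A \<in># concl D2" "gv D2" using c_all[unfolded gv_cut_iff] by simp_all
  obtain R where R: "concl D2 = add_mset (dual A) R" using cut(2) by (metis multi_member_split)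
  have "A \<in># \<Gamma>1" using c_all(1) t by simp
  then obtain \<Gamma>1' where g: "\<Gamma>1 = add_mset A \<Gamma>1'" by (metis multi_member_split)
  obtain Q where Q: "concl D2 = add_mset (dual A) Q" using cut by (metis multi_member_split)
  have l: "gv (dlift 0 D2)" "concl (dlift 0 D2) = add_mset (dual (lift 0 A)) (image_mset (lift 0) Q)"
    using gv_dlift[of D2 0] cut Q by (auto simp: concl_dlift lift_dual)
  have k: "gv (mk_cut (lift 0 A) p (dlift 0 D2))"
    "concl (mk_cut (lift 0 A) p (dlift 0 D2)) = add_mset B (image_mset (lift 0) (\<Gamma>1' + Q))"
    using gv_mk_cut[of p "dlift 0 D2" "lift 0 A"] t g l by auto
  show ?case using k t g cut Q
    by (auto intro!: exI[where x="\<Gamma>1' + Q"])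
next
  case (c_hyp A G1 G D2)
  then show ?case by auto
next
  case (sym b A G D2 D1 D')
  have "gv (Der (RCut (dual A)) G [D2, D1])" using sym(3) by (auto simp: gv_cut_iff ac_simps)
  then show ?case using sym(2) by simp
qed

lemma sum_upd: "i < length ps \<Longrightarrow> sum_list (map f (ps[i := x])) + f (ps ! i) = sum_list (map f ps) + (f x :: nat)"
proof (induct ps arbitrary: i)
  case Nil then show ?case by simp
next
  case (Cons a ps) then show ?case by (cases i) auto
qed

lemma step_gv: "step b D D' \<Longrightarrow> gv D \<Longrightarrow> gv D' \<and> concl D' = concl D"
proof (induct rule: step.induct)
  case (root b D D')
  then show ?case using root_step_gv by blast
next
  case (ctxt i ps b D' r G)
  have g: "gv (ps ! i)" using ctxt by (auto dest: nth_mem)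
  with ctxt have d: "gv D'" "concl D' = concl (ps ! i)" by auto
  have m: "map concl (ps[i := D']) = map concl ps" using d ctxt(1)
    by (metis list_update_id map_update)
  have "\<forall>p\<in>set (ps[i := D']). gv p" using ctxt(4) d
    by (auto dest!: set_update_subset_insert[THEN subsetD])
  then show ?case using ctxt(4) m by simp
qed

fun is_cp :: "rule \<Rightarrow> bool" where "is_cp (RCp A) = True" | "is_cp _ = False"

fun phi :: "deriv \<Rightarrow> nat" where
  "phi (Der r G ps) = (if is_cp r then size G - 1 else 0) + sum_list (map phi ps)"

fun cm :: "deriv \<Rightarrow> nat" where
  "cm (Der r G ps) = (if is_cut r then dsize (Der r G ps) else 0) + sum_list (map cm ps)"

definition pm :: "deriv \<Rightarrow> nat" where "pm D = dsize D + phi D"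

lemma is_cp_rsubst[simp]: "is_cp (rsubst k C r) = is_cp r" by (cases r) auto
lemma is_cut_rsubst[simp]: "is_cut (rsubst k C r) = is_cut r" by (cases r) auto
lemma is_cp_rlift[simp]: "is_cp (rlift k r) = is_cp r" by (cases r) auto
lemma is_cut_rlift[simp]: "is_cut (rlift k r) = is_cut r" by (cases r) auto

lemma sum_map_cong: "(\<And>p. p \<in> set ps \<Longrightarrow> f (g p) = (h p :: nat)) \<Longrightarrow> sum_list (map (\<lambda>p. f (g p)) ps) = sum_list (map h ps)"
  by (induct ps) auto

lemma meas_dsubst: "dsize (dsubst k C D) = dsize D \<and> phi (dsubst k C D) = phi D \<and> cm (dsubst k C D) = cm D"
proof (induct D arbitrary: k C)
  case (Der r G ps)
  have a: "sum_list (map (\<lambda>p. dsize (dsubst (if is_All_rule r then Suc k else k) (if is_All_rule r then lift 0 C else C) p)) ps) = sum_list (map dsize ps)"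
    by (rule sum_map_cong) (use Der in blast)
  have b: "sum_list (map (\<lambda>p. phi (dsubst (if is_All_rule r then Suc k else k) (if is_All_rule r then lift 0 C else C) p)) ps) = sum_list (map phi ps)"
    by (rule sum_map_cong) (use Der in blast)
  have c: "sum_list (map (\<lambda>p. cm (dsubst (if is_All_rule r then Suc k else k) (if is_All_rule r then lift 0 C else C) p)) ps) = sum_list (map cm ps)"
    by (rule sum_map_cong) (use Der in blast)
  show ?case using a b c by (simp add: o_def)
qed

lemma meas_dlift: "dsize (dlift k D) = dsize D \<and> phi (dlift k D) = phi D \<and> cm (dlift k D) = cm D"
proof (induct D arbitrary: k)
  case (Der r G ps)
  have a: "sum_list (map (\<lambda>p. dsize (dlift (if is_All_rule r then Suc k else k) p)) ps) = sum_list (map dsize ps)"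
    by (rule sum_map_cong) (use Der in blast)
  have b: "sum_list (map (\<lambda>p. phi (dlift (if is_All_rule r then Suc k else k) p)) ps) = sum_list (map phi ps)"
    by (rule sum_map_cong) (use Der in blast)
  have c: "sum_list (map (\<lambda>p. cm (dlift (if is_All_rule r then Suc k else k) p)) ps) = sum_list (map cm ps)"
    by (rule sum_map_cong) (use Der in blast)
  show ?case using a b c by (simp add: o_def)
qed

lemma meas_mk_cut: "dsize (mk_cut A p q) = Suc (dsize p + dsize q)" "phi (mk_cut A p q) = phi p + phi q"
  "cm (mk_cut A p q) = Suc (dsize p + dsize q) + cm p + cm q"
  by (simp_all add: mk_cut_def)

lemma meas_wk_list: "dsize (wk_list ws r) = length ws + dsize r \<and> phi (wk_list ws r) = phi r"
  by (induct ws) (auto simp: Let_def)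

lemma meas_abs_list: "dsize (abs_list ws r) = length ws + dsize r \<and> phi (abs_list ws r) = phi r"
  by (induct ws) (auto simp: Let_def)

lemma dsize_pos: "dsize D > 0" by (cases D) auto

lemma root_meas: "root_step b D D' \<Longrightarrow> gv D \<Longrightarrow>
  (b \<longrightarrow> pm D' < pm D) \<and> (\<not> b \<longrightarrow> dsize D' \<le> dsize D \<and> phi D' \<le> phi D \<and> cm D' < cm D)"
proof (induct rule: root_step.induct)
  case (ax D1 A G D2)
  then show ?case by (simp add: pm_def)
next
  case (tens_par B C G G1 p q G2 r)
  then show ?case by (simp add: pm_def meas_mk_cut)
next
  case (one_bot G G1 G2 r)
  then show ?case by (simp add: pm_def)
next
  case (all_ex B G G1 p C G2 r)
  then show ?case by (simp add: pm_def meas_mk_cut meas_dsubst)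
next
  case (cp_cp E G B G1 p1 p2 G2 q1 q2)
  from cp_cp obtain \<Gamma>1 where c1: "G1 = add_mset (Bang B) (image_mset Wn \<Gamma>1)" by auto
  from cp_cp obtain \<Gamma>2 where c2: "G2 = add_mset (Bang (dual E)) (image_mset Wn \<Gamma>2)" by auto
  have cut: "Wn E \<in># G1" "G = (G1 - {#Wn E#}) + (G2 - {#Bang (dual E)#})"
    using cp_cp[unfolded gv_cut_iff] by simp_all
  then have "E \<in># \<Gamma>1" using c1 by auto
  then obtain \<Gamma>1' where g1: "\<Gamma>1 = add_mset E \<Gamma>1'" by (metis multi_member_split)
  have G: "G = add_mset (Bang B) (image_mset Wn \<Gamma>1' + image_mset Wn \<Gamma>2)" using cut c1 c2 g1 by simp
  show ?case using G c1 c2 g1 by (simp add: pm_def meas_mk_cut)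
next
  case (cp_wk ws G1 B G p1 p2 G2 r)
  from cp_wk obtain \<Gamma>1 where c1: "G1 = add_mset (Bang B) (image_mset Wn \<Gamma>1)" by auto
  have "length ws = size (G1 - {#Bang B#})" using cp_wk(1) by (metis size_image_mset size_mset)
  then have "length ws = size \<Gamma>1" using c1 by simp
  then show ?case using c1 by (simp add: pm_def meas_wk_list)
next
  case (cp_abs1 ws G1 B G p1 p2 G2 r)
  from cp_abs1 obtain \<Gamma>1 where c1: "G1 = add_mset (Bang B) (image_mset Wn \<Gamma>1)" by auto
  have "length ws = size (G1 - {#Bang B#})" using cp_abs1(1) by (metis size_image_mset size_mset)
  then have "length ws = size \<Gamma>1" using c1 by simp
  then show ?case using c1 by (simp add: pm_def meas_abs_list meas_mk_cut)
next
  case (cp_abs2 ws G1 B G p1 p2 G2 r)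
  from cp_abs2 obtain \<Gamma>1 where c1: "G1 = add_mset (Bang B) (image_mset Wn \<Gamma>1)" by auto
  have "length ws = size (G1 - {#Bang B#})" using cp_abs2(1) by (metis size_image_mset size_mset)
  then have "length ws = size \<Gamma>1" using c1 by simp
  then show ?case using c1 by (simp add: pm_def meas_abs_list meas_mk_cut)
next
  case (c_all A G1 B G p D2)
  then show ?case by (simp add: meas_mk_cut meas_dlift)
next
  case (sym b A G D2 D1 D')
  have "gv (Der (RCut (dual A)) G [D2, D1])" using sym(3) by (auto simp: gv_cut_iff ac_simps)
  then show ?case using sym(2) by (simp add: pm_def ac_simps)
qed (simp_all add: meas_mk_cut)

lemma step_meas: "step b D D' \<Longrightarrow> gv D \<Longrightarrow>
  (b \<longrightarrow> pm D' < pm D) \<and> (\<not> b \<longrightarrow> dsize D' \<le> dsize D \<and> phi D' \<le> phi D \<and> cm D' < cm D)"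
proof (induct rule: step.induct)
  case (root b D D')
  then show ?case using root_meas by blast
next
  case (ctxt i ps b D' r G)
  have g: "gv (ps ! i)" using ctxt by (auto dest: nth_mem)
  with ctxt have IH: "(b \<longrightarrow> pm D' < pm (ps ! i)) \<and> (\<not> b \<longrightarrow> dsize D' \<le> dsize (ps ! i) \<and> phi D' \<le> phi (ps ! i) \<and> cm D' < cm (ps ! i))"
    by auto
  have s1: "sum_list (map dsize (ps[i := D'])) + dsize (ps ! i) = sum_list (map dsize ps) + dsize D'"
    using ctxt(1) by (rule sum_upd)
  have s2: "sum_list (map phi (ps[i := D'])) + phi (ps ! i) = sum_list (map phi ps) + phi D'"
    using ctxt(1) by (rule sum_upd)
  have s3: "sum_list (map cm (ps[i := D'])) + cm (ps ! i) = sum_list (map cm ps) + cm D'"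
    using ctxt(1) by (rule sum_upd)
  show ?case using IH s1 s2 s3 by (auto simp: pm_def)
qed

lemma sum_sq: "sum_list (map (\<lambda>x. f x ^ 2) xs) \<le> (sum_list (map f xs) :: nat) ^ 2"
proof (induct xs)
  case Nil then show ?case by simp
next
  case (Cons a xs)
  have "(f a + sum_list (map f xs))^2 = f a ^ 2 + 2 * f a * sum_list (map f xs) + (sum_list (map f xs))^2"
    by (simp add: power2_sum)
  then show ?case using Cons by simp
qed

lemma cm_le: "cm D \<le> dsize D ^ 2"
proof (induct D)
  case (Der r G ps)
  have "sum_list (map cm ps) \<le> sum_list (map (\<lambda>p. dsize p ^ 2) ps)"
    using Der by (intro sum_list_mono) auto
  also have "\<dots> \<le> (sum_list (map dsize ps))^2" by (rule sum_sq)
  finally have a: "sum_list (map cm ps) \<le> (sum_list (map dsize ps))^2" .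
  let ?s = "sum_list (map dsize ps)"
  have "cm (Der r G ps) \<le> Suc ?s + ?s^2" using a by simp
  also have "\<dots> \<le> (Suc ?s)^2" by (simp add: power2_eq_square)
  finally show ?case by simp
qed

definition prin :: "form \<Rightarrow> deriv \<Rightarrow> bool" where
 "prin A D \<longleftrightarrow>
 (\<exists>B C G1 p q. D = Der (RTens B C) G1 [p,q] \<and> A = Tens B C) \<or>
 (\<exists>B C G1 r. D = Der (RPar B C) G1 [r] \<and> A = Par B C) \<or>
 (\<exists>G1. D = Der ROne G1 [] \<and> A = One) \<or>
 (\<exists>G1 r. D = Der RBot G1 [r] \<and> A = Bot) \<or>
 (\<exists>B G1 r. D = Der (RWk B) G1 [r] \<and> A = Wn B) \<or>
 (\<exists>B G1 r. D = Der (RAbs B) G1 [r] \<and> A = Wn B) \<or>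
 (\<exists>B G1 p. D = Der (RAll B) G1 [p] \<and> A = All B) \<or>
 (\<exists>B C G1 r. D = Der (REx B C) G1 [r] \<and> A = Ex B) \<or>
 (\<exists>B G1 p1 p2 ws. D = Der (RCp B) G1 [p1,p2] \<and> A = Bang B \<and> image_mset Wn (mset ws) = G1 - {#Bang B#}) \<or>
 (\<exists>B G1 p1 p2 E. D = Der (RCp B) G1 [p1,p2] \<and> A = Wn E)"

lemma side:
  assumes "gv (Der r G1 ps)" "\<not> is_cut r" "A \<in># G1"
  shows "(\<forall>G D2. \<exists>b E. root_step b (Der (RCut A) G [Der r G1 ps, D2]) E) \<or> prin A (Der r G1 ps)"
proof (cases r)
  case RAx
  with assms obtain X where X: "G1 = {#X, dual X#}" "ps = []" by auto
  then have "G1 = {#A, dual A#}" using assms(3) by (auto simp: add_mset_commute)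
  then show ?thesis using X RAx
    apply -
    apply (rule disjI1)
    apply (intro allI exI)
    apply (rule root_step.ax)
    by simp_all
next
  case (RCut x)
  then show ?thesis using assms by simp
next
  case (RTens B C)
  with assms obtain p q \<Gamma> \<Delta> where t: "ps = [p, q]" "concl p = add_mset B \<Gamma>" "concl q = add_mset C \<Delta>"
     "G1 = add_mset (Tens B C) (\<Gamma> + \<Delta>)" by auto
  consider "A = Tens B C" | "A \<in># \<Gamma>" | "A \<in># \<Delta>" using assms(3) t by auto
  then show ?thesis
  proof cases
    case 1 then show ?thesis using t RTens unfolding prin_def by auto
  next
    case 2 then have "A \<in># concl p - {#B#}" using t by simp
    then show ?thesis unfolding RTens t(1) by (blast intro: root_step.c_tens1)
  next
    case 3 then have "A \<in># concl q - {#C#}" using t by simp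
    then show ?thesis unfolding RTens t(1) by (blast intro: root_step.c_tens2)
  qed
next
  case (RPar B C)
  with assms obtain p \<Gamma> where t: "ps = [p]" "concl p = add_mset B (add_mset C \<Gamma>)"
     "G1 = add_mset (Par B C) \<Gamma>" by auto
  consider "A = Par B C" | "A \<in># \<Gamma>" using assms(3) t by auto
  then show ?thesis
  proof cases
    case 1 then show ?thesis using t RPar unfolding prin_def by auto
  next
    case 2 then have "A \<in># concl p - {#B, C#}" using t by simp
    then show ?thesis unfolding RPar t(1) by (blast intro: root_step.c_par)
  qed
next
  case ROne
  then show ?thesis using assms unfolding prin_def by auto
next
  case RBot
  with assms obtain p where t: "ps = [p]" "G1 = add_mset Bot (concl p)" by auto
  consider "A = Bot" | "A \<in># concl p" using assms(3) t by auto
  then show ?thesis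
  proof cases
    case 1 then show ?thesis using t RBot unfolding prin_def by auto
  next
    case 2 then show ?thesis unfolding RBot t(1) by (blast intro: root_step.c_bot)
  qed
next
  case (RWk B)
  with assms obtain p where t: "ps = [p]" "G1 = add_mset (Wn B) (concl p)" by auto
  consider "A = Wn B" | "A \<in># concl p" using assms(3) t by auto
  then show ?thesis
  proof cases
    case 1 then show ?thesis using t RWk unfolding prin_def by auto
  next
    case 2 then show ?thesis unfolding RWk t(1) by (blast intro: root_step.c_wk)
  qed
next
  case (RAbs B)
  with assms obtain p \<Gamma> where t: "ps = [p]" "concl p = add_mset B (add_mset (Wn B) \<Gamma>)"
     "G1 = add_mset (Wn B) \<Gamma>" by auto
  consider "A = Wn B" | "A \<in># \<Gamma>" using assms(3) t by auto
  then show ?thesis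
  proof cases
    case 1 then show ?thesis using t RAbs unfolding prin_def by auto
  next
    case 2 then have "A \<in># concl p - {#B, Wn B#}" using t by simp
    then show ?thesis unfolding RAbs t(1) by (blast intro: root_step.c_abs)
  qed
next
  case (RAll B)
  with assms obtain p \<Gamma> where t: "ps = [p]" "G1 = add_mset (All B) \<Gamma>" by auto
  consider "A = All B" | "A \<in># \<Gamma>" using assms(3) t by auto
  then show ?thesis
  proof cases
    case 1 then show ?thesis using t RAll unfolding prin_def by auto
  next
    case 2 then have "A \<in># G1 - {#All B#}" using t by simp
    then show ?thesis unfolding RAll t(1) by (blast intro: root_step.c_all)
  qed
next
  case (REx B C)
  with assms obtain p \<Gamma> where t: "ps = [p]" "concl p = add_mset (subst 0 C B) \<Gamma>"
     "G1 = add_mset (Ex B) \<Gamma>" by auto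
  consider "A = Ex B" | "A \<in># \<Gamma>" using assms(3) t by auto
  then show ?thesis
  proof cases
    case 1 then show ?thesis using t REx unfolding prin_def by auto
  next
    case 2 then have "A \<in># concl p - {#subst 0 C B#}" using t by simp
    then show ?thesis unfolding REx t(1) by (blast intro: root_step.c_ex)
  qed
next
  case (RCp B)
  with assms obtain p1 p2 \<Gamma> where t: "ps = [p1, p2]" "G1 = add_mset (Bang B) (image_mset Wn \<Gamma>)" by auto
  obtain xs where "mset xs = \<Gamma>" by (metis ex_mset)
  then have ws: "image_mset Wn (mset xs) = G1 - {#Bang B#}"
    using t by simp
  consider "A = Bang B" | "A \<in># image_mset Wn \<Gamma>" using assms(3) t by auto
  then show ?thesis
  proof cases
    case 1 then show ?thesis using t RCp ws unfolding prin_def by blast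
  next
    case 2 then obtain E where "A = Wn E" by auto
    then show ?thesis using t RCp unfolding prin_def by blast
  qed
next
  case RHyp
  then show ?thesis using assms by (auto intro: root_step.c_hyp)
qed

lemma prin_Par: "prin (Par X Y) D \<Longrightarrow> \<exists>G r. D = Der (RPar X Y) G [r]" unfolding prin_def by auto
lemma prin_Tens: "prin (Tens X Y) D \<Longrightarrow> \<exists>G p q. D = Der (RTens X Y) G [p, q]" unfolding prin_def by auto
lemma prin_One: "prin One D \<Longrightarrow> \<exists>G. D = Der ROne G []" unfolding prin_def by auto
lemma prin_Bot: "prin Bot D \<Longrightarrow> \<exists>G r. D = Der RBot G [r]" unfolding prin_def by auto
lemma prin_All: "prin (All X) D \<Longrightarrow> \<exists>G p. D = Der (RAll X) G [p]" unfolding prin_def by auto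
lemma prin_Ex: "prin (Ex X) D \<Longrightarrow> \<exists>G C r. D = Der (REx X C) G [r]" unfolding prin_def by auto
lemma prin_Bang: "prin (Bang X) D \<Longrightarrow> \<exists>G p1 p2 ws. D = Der (RCp X) G [p1, p2] \<and> image_mset Wn (mset ws) = G - {#Bang X#}"
  unfolding prin_def by auto
lemma prin_Wn: "prin (Wn X) D \<Longrightarrow> (\<exists>G r. D = Der (RWk X) G [r]) \<or> (\<exists>G r. D = Der (RAbs X) G [r]) \<or>
   (\<exists>B G p1 p2. D = Der (RCp B) G [p1, p2])"
  unfolding prin_def by auto
lemma prin_Var: "\<not> prin (Var n) D" "\<not> prin (NVar n) D" unfolding prin_def by auto

lemma pair:
  assumes p1: "prin A D1" and p2: "prin (dual A) D2"
  shows "\<exists>b E. root_step b (Der (RCut A) G [D1, D2]) E"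
proof (cases A)
  case (Var n) then show ?thesis using p1 prin_Var by simp
next
  case (NVar n) then show ?thesis using p1 prin_Var by simp
next
  case (Tens X Y)
  then obtain G1 p q where d1: "D1 = Der (RTens X Y) G1 [p, q]" using p1 prin_Tens by blast
  obtain G2 r where d2: "D2 = Der (RPar (dual X) (dual Y)) G2 [r]" using p2 Tens prin_Par by fastforce
  show ?thesis unfolding d1 d2 Tens by (blast intro: root_step.tens_par)
next
  case (Par X Y)
  then obtain G1 r where d1: "D1 = Der (RPar X Y) G1 [r]" using p1 prin_Par by blast
  obtain G2 p q where d2: "D2 = Der (RTens (dual X) (dual Y)) G2 [p, q]" using p2 Par prin_Tens by fastforce
  have "root_step True (Der (RCut (dual A)) G [D2, D1]) (mk_cut (dual Y) q (mk_cut (dual X) p r))"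
    unfolding d1 d2 Par using root_step.tens_par[of "dual X" "dual Y"] by simp
  then show ?thesis using root_step.sym by blast
next
  case (Bang X)
  then obtain G1 q1 q2 ws where d1: "D1 = Der (RCp X) G1 [q1, q2]" "image_mset Wn (mset ws) = G1 - {#Bang X#}"
    using p1 prin_Bang by blast
  have "(\<exists>G r. D2 = Der (RWk (dual X)) G [r]) \<or> (\<exists>G r. D2 = Der (RAbs (dual X)) G [r]) \<or>
   (\<exists>B G p1 p2. D2 = Der (RCp B) G [p1, p2])" using p2 Bang prin_Wn by simp
  then show ?thesis
  proof (elim disjE exE)
    fix G2 r assume d2: "D2 = Der (RWk (dual X)) G2 [r]"
    show ?thesis unfolding d1 d2 Bang using d1(2) by (blast intro: root_step.cp_wk)
  next
    fix G2 r assume d2: "D2 = Der (RAbs (dual X)) G2 [r]"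
    show ?thesis unfolding d1 d2 Bang using d1(2) by (blast intro: root_step.cp_abs1)
  next
    fix B G2 r1 r2 assume d2: "D2 = Der (RCp B) G2 [r1, r2]"
    have "root_step True (Der (RCut (dual A)) G [D2, D1])
       (Der (RCp B) G [mk_cut (dual X) r1 q1, mk_cut (Wn (dual X)) r2 q2])"
      unfolding d1 d2 Bang using root_step.cp_cp[of "dual X" G B G2 r1 r2 G1 q1 q2] by simp
    then show ?thesis using root_step.sym by blast
  qed
next
  case (Wn X)
  obtain G2 q1 q2 ws where d2: "D2 = Der (RCp (dual X)) G2 [q1, q2]" "image_mset Wn (mset ws) = G2 - {#Bang (dual X)#}"
    using p2 Wn prin_Bang by fastforce
  have "(\<exists>G r. D1 = Der (RWk X) G [r]) \<or> (\<exists>G r. D1 = Der (RAbs X) G [r]) \<or>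
   (\<exists>B G p1 p2. D1 = Der (RCp B) G [p1, p2])" using p1 Wn prin_Wn by simp
  then show ?thesis
  proof (elim disjE exE)
    fix G1 r assume d1: "D1 = Der (RWk X) G1 [r]"
    have "root_step True (Der (RCut (dual A)) G [D2, D1]) (wk_list ws r)"
      unfolding d1 d2 Wn using root_step.cp_wk[of ws G2 "dual X" G q1 q2 G1 r] d2(2) by simp
    then show ?thesis using root_step.sym by blast
  next
    fix G1 r assume d1: "D1 = Der (RAbs X) G1 [r]"
    have "root_step True (Der (RCut (dual A)) G [D2, D1]) (abs_list ws (mk_cut (dual X) q1 (mk_cut (Bang (dual X)) q2 r)))"
      unfolding d1 d2 Wn using root_step.cp_abs1[of ws G2 "dual X" G q1 q2 G1 r] d2(2) by simp
    then show ?thesis using root_step.sym by blast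
  next
    fix B G1 r1 r2 assume d1: "D1 = Der (RCp B) G1 [r1, r2]"
    show ?thesis unfolding d1 d2 Wn by (blast intro: root_step.cp_cp)
  qed
next
  case One
  then obtain G1 where d1: "D1 = Der ROne G1 []" using p1 prin_One by blast
  obtain G2 r where d2: "D2 = Der RBot G2 [r]" using p2 One prin_Bot by fastforce
  show ?thesis unfolding d1 d2 One by (blast intro: root_step.one_bot)
next
  case Bot
  then obtain G1 r where d1: "D1 = Der RBot G1 [r]" using p1 prin_Bot by blast
  obtain G2 where d2: "D2 = Der ROne G2 []" using p2 Bot prin_One by fastforce
  have "root_step True (Der (RCut (dual A)) G [D2, D1]) r"
    unfolding d1 d2 Bot using root_step.one_bot by simp
  then show ?thesis using root_step.sym by blast
next
  case (All X)
  then obtain G1 p where d1: "D1 = Der (RAll X) G1 [p]" using p1 prin_All by blast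
  obtain G2 C r where d2: "D2 = Der (REx (dual X) C) G2 [r]" using p2 All prin_Ex by fastforce
  show ?thesis unfolding d1 d2 All by (blast intro: root_step.all_ex)
next
  case (Ex X)
  then obtain G1 C r where d1: "D1 = Der (REx X C) G1 [r]" using p1 prin_Ex by blast
  obtain G2 p where d2: "D2 = Der (RAll (dual X)) G2 [p]" using p2 Ex prin_All by fastforce
  have "root_step True (Der (RCut (dual A)) G [D2, D1]) (mk_cut (subst 0 C (dual X)) (dsubst 0 C p) r)"
    unfolding d1 d2 Ex using root_step.all_ex[of "dual X" G G2 p C G1 r] by simp
  then show ?thesis using root_step.sym by blast
qed

lemma cut_free_Der: "cut_free (Der r G ps) \<longleftrightarrow> \<not> is_cut r \<and> (\<forall>p\<in>set ps. cut_free p)"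
  unfolding cut_free_def by auto

lemma root_prog:
  assumes g: "gv (Der (RCut A) G [D1, D2])" and c1: "cut_free D1" and c2: "cut_free D2"
  shows "\<exists>b E. root_step b (Der (RCut A) G [D1, D2]) E"
proof -
  obtain r1 G1 ps1 where d1: "D1 = Der r1 G1 ps1" by (cases D1)
  obtain r2 G2 ps2 where d2: "D2 = Der r2 G2 ps2" by (cases D2)
  have g1: "gv D1" "gv D2" "A \<in># concl D1" "dual A \<in># concl D2" using g[unfolded gv_cut_iff] by auto
  have n1: "\<not> is_cut r1" "\<not> is_cut r2" using c1 c2 d1 d2 by (auto simp: cut_free_Der)
  have s1: "(\<forall>G D2. \<exists>b E. root_step b (Der (RCut A) G [D1, D2]) E) \<or> prin A D1"
    using side[of r1 G1 ps1 A] g1 n1 d1 by simp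
  have s2: "(\<forall>G D1. \<exists>b E. root_step b (Der (RCut (dual A)) G [D2, D1]) E) \<or> prin (dual A) D2"
    using side[of r2 G2 ps2 "dual A"] g1 n1 d2 by simp
  show ?thesis
  proof (cases "prin A D1 \<and> prin (dual A) D2")
    case True then show ?thesis using pair by blast
  next
    case False
    then show ?thesis using s1 s2 root_step.sym by blast
  qed
qed

lemma progress: "gv D \<Longrightarrow> \<not> cut_free D \<Longrightarrow> \<exists>b E. step b D E"
proof (induct D)
  case (Der r G ps)
  show ?case
  proof (cases "\<exists>p\<in>set ps. \<not> cut_free p")
    case True
    then obtain i where i: "i < length ps" "\<not> cut_free (ps ! i)" by (metis in_set_conv_nth)
    have "gv (ps ! i)" using Der(2) i by (auto dest: nth_mem)
    then obtain b E where "step b (ps ! i) E" using Der(1)[of "ps ! i"] i by (auto dest: nth_mem)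
    then show ?thesis using i step.ctxt by blast
  next
    case False
    then have cr: "is_cut r" using Der(3) by (auto simp: cut_free_Der)
    then obtain A where r: "r = RCut A" by (cases r) auto
    then obtain D1 D2 where ps: "ps = [D1, D2]" using Der(2) by auto
    have "\<exists>b E. root_step b (Der (RCut A) G [D1, D2]) E"
      using root_prog[of A G D1 D2] Der(2) False r ps by auto
    then show ?thesis using r ps step.root by blast
  qed
qed

lemma seq_gv:
  assumes "red_seq R Ds" "\<And>x y. R x y \<Longrightarrow> \<exists>b. step b x y" "gv (hd Ds)"
  shows "i < length Ds \<Longrightarrow> gv (Ds ! i)"
proof (induct i)
  case 0 then show ?case using assms by (simp add: hd_conv_nth red_seq_def)
next
  case (Suc i)
  then have "R (Ds ! i) (Ds ! Suc i)" using assms(1) by (simp add: red_seq_def)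
  then obtain b where "step b (Ds ! i) (Ds ! Suc i)" using assms(2) by blast
  then show ?case using step_gv Suc by auto
qed

lemma filter_Wn: "filter_mset is_Wn (image_mset Wn X) = image_mset Wn X"
  by (induct X) auto

lemma valid_nodes: "valid D \<Longrightarrow> (r, G) \<in> set (nodes D) \<Longrightarrow> \<exists>cs. rule_ok r G cs"
proof (induct arbitrary: r G rule: valid.induct)
  case (1 r' G' ps)
  then show ?case by auto
qed

lemma S_ge: "(RCp A, G) \<in> set (nodes D) \<Longrightarrow> size (filter_mset is_Wn G) \<le> S D"
proof -
  assume a: "(RCp A, G) \<in> set (nodes D)"
  have fin: "finite {size (filter_mset is_Wn G) | A G. (RCp A, G) \<in> set (nodes D)}"
    by (rule finite_subset[where B="(\<lambda>(r, G). size (filter_mset is_Wn G)) ` set (nodes D)"]) force+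
  show ?thesis unfolding S_def using a fin by (intro Max_ge) auto
qed

lemma phi_bound: "(\<And>A G. (RCp A, G) \<in> set (nodes D) \<Longrightarrow> size G - 1 \<le> s) \<Longrightarrow> phi D \<le> s * dsize D"
proof (induct D)
  case (Der r G ps)
  have a: "(if is_cp r then size G - 1 else 0) \<le> s"
    using Der(2)[of _ G] by (cases r) auto
  have "sum_list (map phi ps) \<le> sum_list (map (\<lambda>p. s * dsize p) ps)"
    by (rule sum_list_mono) (use Der in auto)
  also have "\<dots> = s * sum_list (map dsize ps)" by (induct ps) (auto simp: algebra_simps)
  finally show ?case using a by simp
qed

lemma pm_bound: "valid D \<Longrightarrow> pm D \<le> (S D + 1) * dsize D"
proof -
  assume v: "valid D"
  have "phi D \<le> S D * dsize D"
  proof (rule phi_bound)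
    fix A G assume n: "(RCp A, G) \<in> set (nodes D)"
    then obtain \<Gamma> where "G = image_mset Wn \<Gamma> + {#Bang A#}" using valid_nodes[OF v n] by auto
    then have "size G - 1 = size (filter_mset is_Wn G)" by (simp add: filter_Wn)
    then show "size G - 1 \<le> S D" using S_ge[OF n] by simp
  qed
  then show ?thesis by (simp add: pm_def)
qed

lemma seq_principal:
  assumes "red_seq principal_step Ds" "gv (hd Ds)"
  shows "i < length Ds \<Longrightarrow> pm (Ds ! i) + i \<le> pm (hd Ds)"
proof (induct i)
  case 0 then show ?case using assms by (simp add: hd_conv_nth red_seq_def)
next
  case (Suc i)
  have st: "step True (Ds ! i) (Ds ! Suc i)" using assms(1) Suc(2) by (simp add: red_seq_def principal_step_def)
  have "gv (Ds ! i)" using seq_gv[OF assms(1) _ assms(2), of i] Suc(2) by (auto simp: principal_step_def)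
  then have "pm (Ds ! Suc i) < pm (Ds ! i)" using step_meas[OF st] by simp
  then show ?case using Suc by simp
qed

lemma arith1: "a' < (a::nat) \<Longrightarrow> c' < K \<Longrightarrow> a' * K + c' + 1 \<le> a * K + c"
proof -
  assume h: "a' < a" "c' < K"
  have "(a' + 1) * K \<le> a * K" using h(1) by (intro mult_le_mono1) simp
  then show ?thesis using h(2) by (simp add: algebra_simps)
qed

lemma arith2: "a' \<le> (a::nat) \<Longrightarrow> c' < c \<Longrightarrow> a' * K + c' + 1 \<le> a * K + c"
proof -
  assume h: "a' \<le> a" "c' < c"
  have "a' * K \<le> a * K" using h(1) by (rule mult_le_mono1)
  then show ?thesis using h(2) by linarith
qed

lemma seq_cut:
  assumes "red_seq cut_step Ds" "gv (hd Ds)"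
  shows "i < length Ds \<Longrightarrow> pm (Ds ! i) \<le> pm (hd Ds) \<and>
    pm (Ds ! i) * (pm (hd Ds) ^ 2 + 1) + cm (Ds ! i) + i \<le> pm (hd Ds) * (pm (hd Ds) ^ 2 + 1) + cm (hd Ds)"
proof (induct i)
  case 0 then show ?case using assms by (simp add: hd_conv_nth red_seq_def)
next
  case (Suc i)
  let ?K = "pm (hd Ds) ^ 2 + 1"
  have IH: "pm (Ds ! i) \<le> pm (hd Ds)"
     "pm (Ds ! i) * ?K + cm (Ds ! i) + i \<le> pm (hd Ds) * ?K + cm (hd Ds)" using Suc by auto
  have cs: "cut_step (Ds ! i) (Ds ! Suc i)" using assms(1) Suc(2) by (simp add: red_seq_def)
  have g: "gv (Ds ! i)" using seq_gv[OF assms(1) _ assms(2), of i] Suc(2) by (auto simp: cut_step_def)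
  show ?case
  proof (cases "step True (Ds ! i) (Ds ! Suc i)")
    case True
    then have lt: "pm (Ds ! Suc i) < pm (Ds ! i)" using step_meas[OF True g] by simp
    have "cm (Ds ! Suc i) \<le> dsize (Ds ! Suc i) ^ 2" by (rule cm_le)
    also have "\<dots> \<le> pm (hd Ds) ^ 2" using lt IH(1) by (intro power_mono) (auto simp: pm_def)
    finally have "cm (Ds ! Suc i) < ?K" by simp
    then have "pm (Ds ! Suc i) * ?K + cm (Ds ! Suc i) + 1 \<le> pm (Ds ! i) * ?K + cm (Ds ! i)"
      using lt by (intro arith1)
    then show ?thesis using IH lt by simp
  next
    case False
    then have st: "step False (Ds ! i) (Ds ! Suc i)" using cs by (simp add: cut_step_def)
    have m: "pm (Ds ! Suc i) \<le> pm (Ds ! i)" "cm (Ds ! Suc i) < cm (Ds ! i)"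
      using step_meas[OF st g] by (auto simp: pm_def)
    then have "pm (Ds ! Suc i) * ?K + cm (Ds ! Suc i) + 1 \<le> pm (Ds ! i) * ?K + cm (Ds ! i)"
      by (intro arith2)
    then show ?thesis using IH m by simp
  qed
qed

lemma arith3: "1 \<le> (Q::nat) \<Longrightarrow> P \<le> Q \<Longrightarrow> C \<le> P ^ 2 \<Longrightarrow> P * (P ^ 2 + 1) + C \<le> 3 * Q ^ 3"
proof -
  assume h: "1 \<le> Q" "P \<le> Q" "C \<le> P ^ 2"
  have a: "P * (P ^ 2 + 1) \<le> Q * (Q ^ 2 + 1)" using h by (intro mult_le_mono add_le_mono power_mono) auto
  have b: "P ^ 2 \<le> Q ^ 2" using h by (intro power_mono) auto
  have c: "Q \<le> Q ^ 3" using power_increasing[of 1 3 Q] h by simp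
  have d: "Q ^ 2 \<le> Q ^ 3" using h by (intro power_increasing) auto
  have "Q * (Q ^ 2 + 1) = Q ^ 3 + Q" by (simp add: algebra_simps power3_eq_cube power2_eq_square)
  then show ?thesis using a b c d h by linarith
qed

theorem mainTheorem5:
  shows
  "(\<exists>c::nat. \<forall>Ds. red_seq cut_step Ds \<and> valid (hd Ds) \<longrightarrow>
       length Ds - 1 \<le> c * (S (hd Ds) + 1) ^ 3 * dsize (hd Ds) ^ 3 \<and>
       (\<forall>E \<in> set Ds. dsize E \<le> c * (S (hd Ds) + 1) ^ 3 * dsize (hd Ds) ^ 3))
 \<and> (\<exists>c::nat. \<forall>Ds. red_seq principal_step Ds \<and> valid (hd Ds) \<longrightarrow>
       length Ds - 1 \<le> c * (S (hd Ds) + 1) * dsize (hd Ds) \<and>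
       (\<forall>E \<in> set Ds. dsize E \<le> c * (S (hd Ds) + 1) * dsize (hd Ds)))
 \<and> (\<forall>Ds. red_seq cut_step Ds \<and> valid (hd Ds) \<and> \<not> (\<exists>E. cut_step (last Ds) E) \<longrightarrow>
       cut_free (last Ds))"
proof (intro conjI)
  show "\<exists>c::nat. \<forall>Ds. red_seq cut_step Ds \<and> valid (hd Ds) \<longrightarrow>
       length Ds - 1 \<le> c * (S (hd Ds) + 1) ^ 3 * dsize (hd Ds) ^ 3 \<and>
       (\<forall>E \<in> set Ds. dsize E \<le> c * (S (hd Ds) + 1) ^ 3 * dsize (hd Ds) ^ 3)"
  proof (intro exI allI impI conjI ballI)
    fix Ds assume a: "red_seq cut_step Ds \<and> valid (hd Ds)"
    let ?Q = "(S (hd Ds) + 1) * dsize (hd Ds)"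
    have g: "gv (hd Ds)" using a valid_gv by blast
    have ne: "Ds \<noteq> []" using a by (simp add: red_seq_def)
    have pq: "pm (hd Ds) \<le> ?Q" using a pm_bound by blast
    have q1: "1 \<le> ?Q" using dsize_pos[of "hd Ds"] by simp
    have Q3: "3 * ?Q ^ 3 = 3 * (S (hd Ds) + 1) ^ 3 * dsize (hd Ds) ^ 3" by (simp only: power_mult_distrib mult.assoc)
    have cm0: "cm (hd Ds) \<le> pm (hd Ds) ^ 2"
    proof -
      have "dsize (hd Ds) ^ 2 \<le> pm (hd Ds) ^ 2" by (rule power_mono) (auto simp: pm_def)
      then show ?thesis using cm_le[of "hd Ds"] by linarith
    qed
    have "length Ds - 1 < length Ds" using ne by simp
    then have "length Ds - 1 \<le> pm (hd Ds) * (pm (hd Ds) ^ 2 + 1) + cm (hd Ds)"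
      using seq_cut[OF conjunct1[OF a] g, of "length Ds - 1"] by linarith
    also have "\<dots> \<le> 3 * ?Q ^ 3" using arith3[OF q1 pq cm0] .
    finally show "length Ds - 1 \<le> 3 * (S (hd Ds) + 1) ^ 3 * dsize (hd Ds) ^ 3" using Q3 by simp
    fix E assume "E \<in> set Ds"
    then obtain i where i: "i < length Ds" "E = Ds ! i" by (metis in_set_conv_nth)
    have "dsize E \<le> pm E" by (simp add: pm_def)
    also have "\<dots> \<le> pm (hd Ds)" using seq_cut[OF conjunct1[OF a] g i(1)] i by simp
    also have "\<dots> \<le> ?Q" by (rule pq)
    also have "\<dots> \<le> ?Q ^ 3" using power_increasing[of 1 3 ?Q] q1 by simp
    also have "\<dots> \<le> 3 * ?Q ^ 3" by simp
    finally show "dsize E \<le> 3 * (S (hd Ds) + 1) ^ 3 * dsize (hd Ds) ^ 3" using Q3 by simp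
  qed
next
  show "\<exists>c::nat. \<forall>Ds. red_seq principal_step Ds \<and> valid (hd Ds) \<longrightarrow>
       length Ds - 1 \<le> c * (S (hd Ds) + 1) * dsize (hd Ds) \<and>
       (\<forall>E \<in> set Ds. dsize E \<le> c * (S (hd Ds) + 1) * dsize (hd Ds))"
  proof (intro exI[of _ 1] allI impI conjI ballI)
    fix Ds assume a: "red_seq principal_step Ds \<and> valid (hd Ds)"
    have g: "gv (hd Ds)" using a valid_gv by blast
    have ne: "Ds \<noteq> []" using a by (simp add: red_seq_def)
    have pq: "pm (hd Ds) \<le> (S (hd Ds) + 1) * dsize (hd Ds)" using a pm_bound by blast
    have "length Ds - 1 < length Ds" using ne by simp
    then have "length Ds - 1 \<le> pm (hd Ds)"
      using seq_principal[OF conjunct1[OF a] g, of "length Ds - 1"] by linarith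
    then show "length Ds - 1 \<le> 1 * (S (hd Ds) + 1) * dsize (hd Ds)" using pq by simp
    fix E assume "E \<in> set Ds"
    then obtain i where i: "i < length Ds" "E = Ds ! i" by (metis in_set_conv_nth)
    have "dsize E \<le> pm E" by (simp add: pm_def)
    also have "\<dots> \<le> pm (hd Ds)" using seq_principal[OF conjunct1[OF a] g i(1)] i by simp
    finally show "dsize E \<le> 1 * (S (hd Ds) + 1) * dsize (hd Ds)" using pq by simp
  qed
next
  show "\<forall>Ds. red_seq cut_step Ds \<and> valid (hd Ds) \<and> \<not> (\<exists>E. cut_step (last Ds) E) \<longrightarrow>
       cut_free (last Ds)"
  proof (intro allI impI)
    fix Ds assume a: "red_seq cut_step Ds \<and> valid (hd Ds) \<and> \<not> (\<exists>E. cut_step (last Ds) E)"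
    have g: "gv (hd Ds)" using a valid_gv by blast
    have ne: "Ds \<noteq> []" using a by (simp add: red_seq_def)
    have "gv (Ds ! (length Ds - 1))"
      using seq_gv[of cut_step Ds, OF _ _ g, of "length Ds - 1"] a ne by (auto simp: cut_step_def)
    then have gl: "gv (last Ds)" using ne by (simp add: last_conv_nth)
    show "cut_free (last Ds)"
    proof (rule ccontr)
      assume "\<not> cut_free (last Ds)"
      then obtain b E where "step b (last Ds) E" using progress gl by blast
      then have "cut_step (last Ds) E" unfolding cut_step_def by (metis (full_types))
      then show False using a by blast
    qed
  qed
qed

end
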